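(* For a (Hausdorff) space $X$ the following are equivalent: (i) For every topological vector space $E$, each convex-valued totally-l.s.c. mapping $\Phi:X\rightrightarrows E$ has a continuous selection. (ii) For every set $\mathcal{A}$, each convex-valued totally-l.s.c. mapping $\Phi:X\rightrightarrows\mathbf{c}_{00}(\mathcal{A})$ has a continuous selection (continuity with respect to the norm $\|\cdot\|_1$). (iii) Each open cover of $X$ has an index-subordinated partition of unity. (iv) For every vector space $E$, each convex-valued totally-l.s.c. mapping $\Phi:X\rightrightarrows E$ has a selection which is continuous with respect to the finite topology on $E$.
   Context: A set-valued mapping $\Phi:X\rightrightarrows Y$ assigns to each $x\in X$ a nonempty $\Phi(x)\subseteq Y$; it is convex-valued if each $\Phi(x)$ is convex, and totally-l.s.c. if $\{x:\Phi(x)\cap U\ne\emptyset\}$ is open for every subset $U\subseteq Y$ (no topology on $Y$ is used). A selection is a map $f$ with $f(x)\in\Phi(x)$ for all $x$. $\mathbf{c}_{00}(\mathcal{A})$ is the space of finitely supported functions $\mathcal{A}\to\mathbb{R}$ with $\|y\|_1=\sum|y(\alpha)|$. The finite topology on a vector space $E$: $U$ is open iff $U\cap L$ is open in $L$ for each finite-dimensional linear subspace $L$ (Euclidean topology). An open cover of $X$ indexed by a set $\mathcal{A}$ is a family $\{U_\alpha\}_{\alpha\in\mathcal{A}}$ of open sets with union $X$. A partition of unity indexed by $\mathcal{A}$ is a family of continuous $\xi_\alpha:X\to[0,1]$ with $\sum_\alpha\xi_\alpha(x)=1$ for each $x$ (only countably many nonzero at each $x$, series converging to $1$); it is index-subordinated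 to $\{U_\alpha\}$ if $\{x:\xi_\alpha(x)\ne0\}\subseteq U_\alpha$ for every $\alpha$. *)

theory Defs
  imports "HOL-Analysis.Analysis" "HOL-Library.Function_Algebras"
begin

text \<open>Real functions \<open>'i \<Rightarrow> real\<close> form a real vector space pointwise (needed so that
  c00(A) is a linear subspace of a real vector space type).\<close>
instantiation "fun" :: (type, real_vector) real_vector
begin
definition scaleR_fun :: "real \<Rightarrow> ('a \<Rightarrow> 'b) \<Rightarrow> 'a \<Rightarrow> 'b" where
  "scaleR_fun r f = (\<lambda>x. r *\<^sub>R f x)"
instance
  by standard (simp_all add: scaleR_fun_def fun_eq_iff scaleR_add_right scaleR_add_left)
end

text \<open>Set-valued mappings \<open>\<Phi> : X \<rightrightarrows> E\<close> are modelled as functions \<open>\<Phi> :: 'a \<Rightarrow> 'e set\<close>,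
  considered on the points of \<open>topspace X\<close>.  A vector space \<open>E\<close> is a linear subspace
  \<open>S\<close> of a real vector space type \<open>'e\<close>.\<close>

definition nonempty_valued :: "'a topology \<Rightarrow> ('a \<Rightarrow> 'e set) \<Rightarrow> bool" where
  "nonempty_valued X \<Phi> \<longleftrightarrow> (\<forall>x\<in>topspace X. \<Phi> x \<noteq> {})"

definition convex_valued :: "'a topology \<Rightarrow> ('a \<Rightarrow> 'e::real_vector set) \<Rightarrow> bool" where
  "convex_valued X \<Phi> \<longleftrightarrow> (\<forall>x\<in>topspace X. convex (\<Phi> x))"

text \<open>totally lower semicontinuous: no topology on the target is used\<close>
definition totally_lsc :: "'a topology \<Rightarrow> ('a \<Rightarrow> 'e set) \<Rightarrow> bool" where
  "totally_lsc X \<Phi> \<longleftrightarrow> (\<forall>U. openin X {x \<in> topspace X. \<Phi> x \<inter> U \<noteq> {}})"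

definition is_selection :: "'a topology \<Rightarrow> ('a \<Rightarrow> 'e set) \<Rightarrow> ('a \<Rightarrow> 'e) \<Rightarrow> bool" where
  "is_selection X \<Phi> f \<longleftrightarrow> (\<forall>x\<in>topspace X. f x \<in> \<Phi> x)"

definition setvalued_into :: "'a topology \<Rightarrow> 'e set \<Rightarrow> ('a \<Rightarrow> 'e set) \<Rightarrow> bool" where
  "setvalued_into X S \<Phi> \<longleftrightarrow> nonempty_valued X \<Phi> \<and> (\<forall>x\<in>topspace X. \<Phi> x \<subseteq> S)"

definition is_tvs :: "'e::real_vector set \<Rightarrow> 'e topology \<Rightarrow> bool" where
  "is_tvs S T \<longleftrightarrow> subspace S \<and> topspace T = S \<and>
     continuous_map (prod_topology T T) T (\<lambda>(u, v). u + v) \<and>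
     continuous_map (prod_topology euclideanreal T) T (\<lambda>(a, v). a *\<^sub>R v)"

definition c00 :: "'i set \<Rightarrow> ('i \<Rightarrow> real) set" where
  "c00 A = {y. finite {\<alpha>. y \<alpha> \<noteq> 0} \<and> {\<alpha>. y \<alpha> \<noteq> 0} \<subseteq> A}"

definition l1norm :: "('i \<Rightarrow> real) \<Rightarrow> real" where
  "l1norm y = (\<Sum>\<alpha>\<in>{\<alpha>. y \<alpha> \<noteq> 0}. \<bar>y \<alpha>\<bar>)"

definition c00_topology :: "'i set \<Rightarrow> ('i \<Rightarrow> real) topology" where
  "c00_topology A = Metric_space.mtopology (c00 A) (\<lambda>y z. l1norm (y - z))"

definition fin_dim_subspace :: "'e::real_vector set \<Rightarrow> bool" where
  "fin_dim_subspace L \<longleftrightarrow> subspace L \<and> (\<exists>B. finite B \<and> span B = L)"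

definition euclidean_top_on :: "'e::real_vector set \<Rightarrow> 'e topology" where
  "euclidean_top_on L = topology (\<lambda>V. V \<subseteq> L \<and>
     (\<forall>B. finite B \<and> independent B \<and> span B = L \<longrightarrow>
        openin (powertop_real B)
          {c \<in> topspace (powertop_real B). (\<Sum>b\<in>B. c b *\<^sub>R b) \<in> V}))"

definition finite_topology :: "'e::real_vector set \<Rightarrow> 'e topology" where
  "finite_topology S = topology (\<lambda>U. U \<subseteq> S \<and>
     (\<forall>L. fin_dim_subspace L \<and> L \<subseteq> S \<longrightarrow> openin (euclidean_top_on L) (U \<inter> L)))"

text \<open>Conditions (i)--(iv).  Each is parametrised by the type of the ambient objects;
  the proper-class quantifiers of the paper become "for all types" at theorem level.\<close>

definition cond_i :: "'a topology \<Rightarrow> 'e::real_vector itself \<Rightarrow> bool" where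
  "cond_i X (_::'e itself) \<longleftrightarrow>
     (\<forall>(S::'e set) T. is_tvs S T \<longrightarrow>
       (\<forall>\<Phi>. setvalued_into X S \<Phi> \<and> convex_valued X \<Phi> \<and> totally_lsc X \<Phi> \<longrightarrow>
          (\<exists>f. continuous_map X T f \<and> is_selection X \<Phi> f)))"

definition cond_ii :: "'a topology \<Rightarrow> 'i itself \<Rightarrow> bool" where
  "cond_ii X (_::'i itself) \<longleftrightarrow>
     (\<forall>A::'i set. \<forall>\<Phi>. setvalued_into X (c00 A) \<Phi> \<and> convex_valued X \<Phi> \<and> totally_lsc X \<Phi> \<longrightarrow>
        (\<exists>f. continuous_map X (c00_topology A) f \<and> is_selection X \<Phi> f))"

definition open_cover_indexed :: "'a topology \<Rightarrow> 'i set \<Rightarrow> ('i \<Rightarrow> 'a set) \<Rightarrow> bool" where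
  "open_cover_indexed X A U \<longleftrightarrow> (\<forall>\<alpha>\<in>A. openin X (U \<alpha>)) \<and> (\<Union>\<alpha>\<in>A. U \<alpha>) = topspace X"

definition partition_of_unity :: "'a topology \<Rightarrow> 'i set \<Rightarrow> ('i \<Rightarrow> 'a \<Rightarrow> real) \<Rightarrow> bool" where
  "partition_of_unity X A \<xi> \<longleftrightarrow>
     (\<forall>\<alpha>\<in>A. continuous_map X euclideanreal (\<xi> \<alpha>) \<and> (\<forall>x\<in>topspace X. 0 \<le> \<xi> \<alpha> x \<and> \<xi> \<alpha> x \<le> 1)) \<and>
     (\<forall>x\<in>topspace X. countable {\<alpha>\<in>A. \<xi> \<alpha> x \<noteq> 0} \<and> ((\<lambda>\<alpha>. \<xi> \<alpha> x) has_sum 1) A)"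

definition index_subordinated :: "'a topology \<Rightarrow> 'i set \<Rightarrow> ('i \<Rightarrow> 'a \<Rightarrow> real) \<Rightarrow> ('i \<Rightarrow> 'a set) \<Rightarrow> bool" where
  "index_subordinated X A \<xi> U \<longleftrightarrow> (\<forall>\<alpha>\<in>A. {x \<in> topspace X. \<xi> \<alpha> x \<noteq> 0} \<subseteq> U \<alpha>)"

definition cond_iii :: "'a topology \<Rightarrow> 'i itself \<Rightarrow> bool" where
  "cond_iii X (_::'i itself) \<longleftrightarrow>
     (\<forall>(A::'i set) U. open_cover_indexed X A U \<longrightarrow>
        (\<exists>\<xi>. partition_of_unity X A \<xi> \<and> index_subordinated X A \<xi> U))"

definition cond_iv :: "'a topology \<Rightarrow> 'e::real_vector itself \<Rightarrow> bool" where
  "cond_iv X (_::'e itself) \<longleftrightarrow>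
     (\<forall>S::'e set. subspace S \<longrightarrow>
       (\<forall>\<Phi>. setvalued_into X S \<Phi> \<and> convex_valued X \<Phi> \<and> totally_lsc X \<Phi> \<longrightarrow>
          (\<exists>f. continuous_map X (finite_topology S) f \<and> is_selection X \<Phi> f)))"

end

theory Submission
  imports Defs
begin



lemma etl_istop: "istopology (\<lambda>V. V \<subseteq> L \<and>
     (\<forall>B. finite B \<and> independent B \<and> span B = L \<longrightarrow>
        openin (powertop_real B)
          {c \<in> topspace (powertop_real B). (\<Sum>b\<in>B. c b *\<^sub>R b) \<in> V}))"
  unfolding istopology_def
proof (rule conjI; intro allI impI)
  fix S T assume a: "S \<subseteq> L \<and> (\<forall>B. finite B \<and> independent B \<and> span B = L \<longrightarrow>
        openin (powertop_real B) {c \<in> topspace (powertop_real B). (\<Sum>b\<in>B. c b *\<^sub>R b) \<in> S})"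
    "T \<subseteq> L \<and> (\<forall>B. finite B \<and> independent B \<and> span B = L \<longrightarrow>
        openin (powertop_real B) {c \<in> topspace (powertop_real B). (\<Sum>b\<in>B. c b *\<^sub>R b) \<in> T})"
  show "S \<inter> T \<subseteq> L \<and> (\<forall>B. finite B \<and> independent B \<and> span B = L \<longrightarrow>
        openin (powertop_real B) {c \<in> topspace (powertop_real B). (\<Sum>b\<in>B. c b *\<^sub>R b) \<in> S \<inter> T})"
  proof (intro conjI allI impI)
    show "S \<inter> T \<subseteq> L" using a by blast
    fix B assume "finite B \<and> independent B \<and> span B = L"
    then have "openin (powertop_real B) ({c \<in> topspace (powertop_real B). (\<Sum>b\<in>B. c b *\<^sub>R b) \<in> S}
       \<inter> {c \<in> topspace (powertop_real B). (\<Sum>b\<in>B. c b *\<^sub>R b) \<in> T})"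
      using a by (intro openin_Int) auto
    moreover have "{c \<in> topspace (powertop_real B). (\<Sum>b\<in>B. c b *\<^sub>R b) \<in> S \<inter> T} =
       {c \<in> topspace (powertop_real B). (\<Sum>b\<in>B. c b *\<^sub>R b) \<in> S}
       \<inter> {c \<in> topspace (powertop_real B). (\<Sum>b\<in>B. c b *\<^sub>R b) \<in> T}" by blast
    ultimately show "openin (powertop_real B) {c \<in> topspace (powertop_real B). (\<Sum>b\<in>B. c b *\<^sub>R b) \<in> S \<inter> T}"
      by (simp only:)
  qed
next
  fix K :: "'a set set"
  assume a: "\<forall>S\<in>K. S \<subseteq> L \<and> (\<forall>B. finite B \<and> independent B \<and> span B = L \<longrightarrow>
        openin (powertop_real B) {c \<in> topspace (powertop_real B). (\<Sum>b\<in>B. c b *\<^sub>R b) \<in> S})"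
  show "\<Union>K \<subseteq> L \<and> (\<forall>B. finite B \<and> independent B \<and> span B = L \<longrightarrow>
        openin (powertop_real B) {c \<in> topspace (powertop_real B). (\<Sum>b\<in>B. c b *\<^sub>R b) \<in> \<Union>K})"
  proof (intro conjI allI impI)
    show "\<Union>K \<subseteq> L" using a by blast
    fix B assume "finite B \<and> independent B \<and> span B = L"
    then have "openin (powertop_real B) (\<Union>S\<in>K. {c \<in> topspace (powertop_real B). (\<Sum>b\<in>B. c b *\<^sub>R b) \<in> S})"
      using a by (intro openin_Union) auto
    moreover have "{c \<in> topspace (powertop_real B). (\<Sum>b\<in>B. c b *\<^sub>R b) \<in> \<Union>K} =
       (\<Union>S\<in>K. {c \<in> topspace (powertop_real B). (\<Sum>b\<in>B. c b *\<^sub>R b) \<in> S})" by blast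
    ultimately show "openin (powertop_real B) {c \<in> topspace (powertop_real B). (\<Sum>b\<in>B. c b *\<^sub>R b) \<in> \<Union>K}"
      by (simp only:)
  qed
qed

lemma openin_etl: "openin (euclidean_top_on L) V \<longleftrightarrow> V \<subseteq> L \<and>
     (\<forall>B. finite B \<and> independent B \<and> span B = L \<longrightarrow>
        openin (powertop_real B)
          {c \<in> topspace (powertop_real B). (\<Sum>b\<in>B. c b *\<^sub>R b) \<in> V})"
  unfolding euclidean_top_on_def using etl_istop[of L] by simp

lemma ft_istop: "istopology (\<lambda>U. U \<subseteq> S \<and>
     (\<forall>L. fin_dim_subspace L \<and> L \<subseteq> S \<longrightarrow> openin (euclidean_top_on L) (U \<inter> L)))"
  unfolding istopology_def
proof (rule conjI; intro allI impI)
  fix U V assume a: "U \<subseteq> S \<and> (\<forall>L. fin_dim_subspace L \<and> L \<subseteq> S \<longrightarrow> openin (euclidean_top_on L) (U \<inter> L))"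
     "V \<subseteq> S \<and> (\<forall>L. fin_dim_subspace L \<and> L \<subseteq> S \<longrightarrow> openin (euclidean_top_on L) (V \<inter> L))"
  show "U \<inter> V \<subseteq> S \<and> (\<forall>L. fin_dim_subspace L \<and> L \<subseteq> S \<longrightarrow> openin (euclidean_top_on L) (U \<inter> V \<inter> L))"
  proof (intro conjI allI impI)
    show "U \<inter> V \<subseteq> S" using a by blast
    fix L assume "fin_dim_subspace L \<and> L \<subseteq> S"
    then have o1: "openin (euclidean_top_on L) (U \<inter> L)" and o2: "openin (euclidean_top_on L) (V \<inter> L)"
        using a by blast+
    have "openin (euclidean_top_on L) ((U \<inter> L) \<inter> (V \<inter> L))" using o1 o2 by (rule openin_Int)
    moreover have "U \<inter> V \<inter> L = (U \<inter> L) \<inter> (V \<inter> L)" by blast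
    ultimately show "openin (euclidean_top_on L) (U \<inter> V \<inter> L)" by (simp only:)
  qed
next
  fix K :: "'a set set"
  assume a: "\<forall>U\<in>K. U \<subseteq> S \<and> (\<forall>L. fin_dim_subspace L \<and> L \<subseteq> S \<longrightarrow> openin (euclidean_top_on L) (U \<inter> L))"
  show "\<Union>K \<subseteq> S \<and> (\<forall>L. fin_dim_subspace L \<and> L \<subseteq> S \<longrightarrow> openin (euclidean_top_on L) (\<Union>K \<inter> L))"
  proof (intro conjI allI impI)
    show "\<Union>K \<subseteq> S" using a by blast
    fix L assume "fin_dim_subspace L \<and> L \<subseteq> S"
    then have "openin (euclidean_top_on L) (\<Union>U\<in>K. U \<inter> L)" using a by (intro openin_Union) auto
    moreover have "\<Union>K \<inter> L = (\<Union>U\<in>K. U \<inter> L)" by blast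
    ultimately show "openin (euclidean_top_on L) (\<Union>K \<inter> L)" by (simp only:)
  qed
qed

lemma openin_ft: "openin (finite_topology S) U \<longleftrightarrow> U \<subseteq> S \<and>
     (\<forall>L. fin_dim_subspace L \<and> L \<subseteq> S \<longrightarrow> openin (euclidean_top_on L) (U \<inter> L))"
  unfolding finite_topology_def using ft_istop[of S] by simp

lemma openin_etl_self: "openin (euclidean_top_on L) L"
  unfolding openin_etl
proof (intro conjI allI impI)
  fix B :: "'a set" assume B: "finite B \<and> independent B \<and> span B = L"
  have "(\<Sum>b\<in>B. c b *\<^sub>R b) \<in> span B" for c
    by (meson span_base span_scale span_sum)
  then have "{c \<in> topspace (powertop_real B). (\<Sum>b\<in>B. c b *\<^sub>R b) \<in> L} = topspace (powertop_real B)"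
    using B by auto
  then show "openin (powertop_real B) {c \<in> topspace (powertop_real B). (\<Sum>b\<in>B. c b *\<^sub>R b) \<in> L}"
    using openin_topspace[of "powertop_real B"] by simp
qed auto

lemma topspace_ft: "topspace (finite_topology S) = S"
proof -
  have "openin (finite_topology S) S"
    unfolding openin_ft using openin_etl_self by (auto simp: Int_absorb1)
  then have "S \<subseteq> topspace (finite_topology S)" by (simp add: openin_subset)
  moreover have "topspace (finite_topology S) \<subseteq> S"
    using openin_ft[of S "topspace (finite_topology S)"] by simp
  ultimately show ?thesis by blast
qed




lemma sum_fun_apply: "(\<Sum>b\<in>B. g b) (a::'i) = (\<Sum>b\<in>B. (g b a :: real))"
proof (cases "finite B")
  case True then show ?thesis by (induction B rule: finite_induct) auto
qed simp

lemma scaleR_fun_apply: "(r *\<^sub>R (f::'i \<Rightarrow> real)) a = r * f a"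
  by (simp add: scaleR_fun_def)

lemma ft_comb_cont:
  fixes S :: "'e::real_vector set"
  assumes F: "finite F" "F \<subseteq> S" and S: "subspace S"
    and c: "\<And>\<alpha>. \<alpha> \<in> F \<Longrightarrow> continuous_map Y euclideanreal (c \<alpha>)"
  shows "continuous_map Y (finite_topology S) (\<lambda>x. \<Sum>\<alpha>\<in>F. c \<alpha> x *\<^sub>R \<alpha>)"
proof -
  define f where "f = (\<lambda>x. \<Sum>\<alpha>\<in>F. c \<alpha> x *\<^sub>R \<alpha>)"
  obtain B where B: "B \<subseteq> F" "independent B" "F \<subseteq> span B"
    using maximal_independent_subset by blast
  have fB: "finite B" using B F finite_subset by blast
  define L where "L = span F"
  have spB: "span B = L" unfolding L_def
    using B by (metis span_eq span_superset subset_trans)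
  have fdL: "fin_dim_subspace L" unfolding fin_dim_subspace_def L_def
    using F by (auto simp: subspace_span)
  have LS: "L \<subseteq> S" unfolding L_def using F S by (simp add: span_minimal)
  have "\<forall>\<alpha>\<in>F. \<exists>u. (\<Sum>v\<in>B. u v *\<^sub>R v) = \<alpha>"
  proof
    fix \<alpha> assume "\<alpha> \<in> F"
    then have "\<alpha> \<in> range (\<lambda>u. \<Sum>v\<in>B. u v *\<^sub>R v)" using B(3) span_finite[OF fB] by auto
    then show "\<exists>u. (\<Sum>v\<in>B. u v *\<^sub>R v) = \<alpha>" by auto
  qed
  then obtain k where k: "\<And>\<alpha>. \<alpha> \<in> F \<Longrightarrow> (\<Sum>v\<in>B. k \<alpha> v *\<^sub>R v) = \<alpha>"
    by metis
  define D where "D = (\<lambda>x. restrict (\<lambda>b. \<Sum>\<alpha>\<in>F. c \<alpha> x * k \<alpha> b) B)"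
  have Deq: "(\<Sum>b\<in>B. D x b *\<^sub>R b) = f x" for x
  proof -
    have "(\<Sum>b\<in>B. D x b *\<^sub>R b) = (\<Sum>b\<in>B. (\<Sum>\<alpha>\<in>F. c \<alpha> x * k \<alpha> b) *\<^sub>R b)"
      unfolding D_def by (rule sum.cong) auto
    also have "\<dots> = (\<Sum>b\<in>B. \<Sum>\<alpha>\<in>F. c \<alpha> x *\<^sub>R (k \<alpha> b *\<^sub>R b))"
      by (simp add: scaleR_sum_left)
    also have "\<dots> = (\<Sum>\<alpha>\<in>F. \<Sum>b\<in>B. c \<alpha> x *\<^sub>R (k \<alpha> b *\<^sub>R b))"
      by (rule sum.swap)
    also have "\<dots> = (\<Sum>\<alpha>\<in>F. c \<alpha> x *\<^sub>R (\<Sum>b\<in>B. k \<alpha> b *\<^sub>R b))"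
      by (simp add: scaleR_sum_right)
    also have "\<dots> = f x" unfolding f_def using k by (intro sum.cong) auto
    finally show ?thesis .
  qed
  have Dc: "continuous_map Y (powertop_real B) D"
    unfolding continuous_map_componentwise
  proof (intro conjI ballI)
    show "D ` topspace Y \<subseteq> extensional B" unfolding D_def by auto
    fix b assume "b \<in> B"
    then have "continuous_map Y euclideanreal (\<lambda>x. \<Sum>\<alpha>\<in>F. c \<alpha> x * k \<alpha> b)"
      using F c by (intro continuous_map_sum continuous_map_real_mult_right) auto
    then show "continuous_map Y euclideanreal (\<lambda>x. D x b)"
      unfolding D_def using \<open>b \<in> B\<close> by simp
  qed
  have fL: "f x \<in> L" for x
    unfolding f_def L_def by (meson span_base span_scale span_sum)
  show ?thesis
    unfolding f_def[symmetric] continuous_map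
  proof (intro conjI allI impI)
    show "f ` topspace Y \<subseteq> topspace (finite_topology S)"
      unfolding topspace_ft using fL LS by blast
    fix U assume "openin (finite_topology S) U"
    then have "openin (euclidean_top_on L) (U \<inter> L)" using fdL LS by (simp add: openin_ft)
    then have O: "openin (powertop_real B) {d \<in> topspace (powertop_real B). (\<Sum>b\<in>B. d b *\<^sub>R b) \<in> U \<inter> L}"
      using fB B(2) spB by (simp add: openin_etl)
    have "{x \<in> topspace Y. f x \<in> U} = {x \<in> topspace Y. D x \<in> {d \<in> topspace (powertop_real B). (\<Sum>b\<in>B. d b *\<^sub>R b) \<in> U \<inter> L}}"
    proof (rule Collect_cong)
      fix x
      have "D x \<in> topspace (powertop_real B)" unfolding D_def by simp
      then show "(x \<in> topspace Y \<and> f x \<in> U) = (x \<in> topspace Y \<and> D x \<in> {d \<in> topspace (powertop_real B). (\<Sum>b\<in>B. d b *\<^sub>R b) \<in> U \<inter> L})"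
        unfolding mem_Collect_eq Int_iff Deq using fL[of x] by blast
    qed
    then show "openin Y {x \<in> topspace Y. f x \<in> U}"
      using openin_continuous_map_preimage[OF Dc O] by (simp only:)
  qed
qed

lemma ft_eval_cont:
  "continuous_map (finite_topology (S::('i \<Rightarrow> real) set)) euclideanreal (\<lambda>y. y a)"
  unfolding continuous_map
proof (intro conjI allI impI)
  fix W :: "real set" assume "openin euclideanreal W"
  show "openin (finite_topology S) {y \<in> topspace (finite_topology S). y a \<in> W}"
    unfolding topspace_ft openin_ft
  proof (intro conjI allI impI)
    fix L assume L: "fin_dim_subspace L \<and> L \<subseteq> S"
    show "openin (euclidean_top_on L) ({y \<in> S. y a \<in> W} \<inter> L)"
      unfolding openin_etl
    proof (intro conjI allI impI)
      fix B assume B: "finite B \<and> independent B \<and> span B = L"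
      have cc: "continuous_map (powertop_real B) euclideanreal (\<lambda>d. \<Sum>b\<in>B. d b * b a)"
      proof (rule continuous_map_sum)
        show "finite B" using B by blast
        fix b assume "b \<in> B"
        show "continuous_map (powertop_real B) euclideanreal (\<lambda>d. d b * b a)"
          by (rule continuous_map_real_mult_right[OF continuous_map_product_projection[OF \<open>b \<in> B\<close>]])
      qed
      have inL0: "(\<Sum>b\<in>B. d b *\<^sub>R b) \<in> span B" for d
        by (meson span_base span_scale span_sum)
      have inL: "(\<Sum>b\<in>B. d b *\<^sub>R b) \<in> L" for d
        using inL0[of d] B by simp
      have ev: "(\<Sum>b\<in>B. d b *\<^sub>R b) a = (\<Sum>b\<in>B. d b * b a)" for d
        by (simp add: sum_fun_apply scaleR_fun_apply)
      have "{d \<in> topspace (powertop_real B). (\<Sum>b\<in>B. d b *\<^sub>R b) \<in> {y \<in> S. y a \<in> W} \<inter> L}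
          = {d \<in> topspace (powertop_real B). (\<Sum>b\<in>B. d b * b a) \<in> W}"
      proof (rule Collect_cong)
        fix d
        show "(d \<in> topspace (powertop_real B) \<and> (\<Sum>b\<in>B. d b *\<^sub>R b) \<in> {y \<in> S. y a \<in> W} \<inter> L) =
          (d \<in> topspace (powertop_real B) \<and> (\<Sum>b\<in>B. d b * b a) \<in> W)"
          unfolding Int_iff mem_Collect_eq ev[of d] using inL[of d] L by blast
      qed
      then show "openin (powertop_real B) {d \<in> topspace (powertop_real B). (\<Sum>b\<in>B. d b *\<^sub>R b) \<in> {y \<in> S. y a \<in> W} \<inter> L}"
        using openin_continuous_map_preimage[OF cc \<open>openin euclideanreal W\<close>] by (simp only:)
    qed auto
  qed auto
qed auto




lemma l1_eq:
  assumes "finite F" "{\<alpha>. y \<alpha> \<noteq> 0} \<subseteq> F"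
  shows "l1norm y = (\<Sum>\<alpha>\<in>F. \<bar>y \<alpha>\<bar>)"
  unfolding l1norm_def by (rule sum.mono_neutral_left) (use assms in auto)

lemma l1_zero0 [simp]: "l1norm 0 = 0"
  by (simp add: l1norm_def)

lemma l1_nonneg: "0 \<le> l1norm y"
  unfolding l1norm_def by (simp add: sum_nonneg)

lemma c00_fin: "y \<in> c00 A \<Longrightarrow> finite {\<alpha>. y \<alpha> \<noteq> 0}"
  unfolding c00_def by simp

lemma l1_add:
  assumes "finite {\<alpha>. a \<alpha> \<noteq> 0}" "finite {\<alpha>. b \<alpha> \<noteq> (0::real)}"
  shows "l1norm (a + b) \<le> l1norm a + l1norm b"
proof -
  let ?F = "{\<alpha>. a \<alpha> \<noteq> 0} \<union> {\<alpha>. b \<alpha> \<noteq> 0}"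
  have fF: "finite ?F" using assms by simp
  have "l1norm (a + b) = (\<Sum>\<alpha>\<in>?F. \<bar>(a + b) \<alpha>\<bar>)" by (rule l1_eq[OF fF]) auto
  also have "\<dots> \<le> (\<Sum>\<alpha>\<in>?F. \<bar>a \<alpha>\<bar> + \<bar>b \<alpha>\<bar>)" by (rule sum_mono) (simp add: abs_triangle_ineq)
  also have "\<dots> = (\<Sum>\<alpha>\<in>?F. \<bar>a \<alpha>\<bar>) + (\<Sum>\<alpha>\<in>?F. \<bar>b \<alpha>\<bar>)" by (rule sum.distrib)
  also have "\<dots> = l1norm a + l1norm b" using l1_eq[OF fF, of a] l1_eq[OF fF, of b] by auto
  finally show ?thesis .
qed

lemma l1_scale:
  assumes "finite {\<alpha>. y \<alpha> \<noteq> (0::real)}"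
  shows "l1norm (c *\<^sub>R y) = \<bar>c\<bar> * l1norm y"
proof -
  have "l1norm (c *\<^sub>R y) = (\<Sum>\<alpha>\<in>{\<alpha>. y \<alpha> \<noteq> 0}. \<bar>(c *\<^sub>R y) \<alpha>\<bar>)"
    by (rule l1_eq[OF assms]) (auto simp: scaleR_fun_apply)
  also have "\<dots> = \<bar>c\<bar> * l1norm y"
    unfolding l1norm_def by (simp add: scaleR_fun_apply abs_mult sum_distrib_left)
  finally show ?thesis .
qed

lemma l1_comp:
  assumes "finite {\<alpha>. y \<alpha> \<noteq> (0::real)}"
  shows "\<bar>y a\<bar> \<le> l1norm y"
proof (cases "y a = 0")
  case True then show ?thesis by (simp add: l1_nonneg)
next
  case False
  then show ?thesis unfolding l1norm_def
    by (rule member_le_sum[where f="\<lambda>\<alpha>. \<bar>y \<alpha>\<bar>", OF _ _ assms, simplified])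
qed

lemma l1_zero:
  assumes "finite {\<alpha>. y \<alpha> \<noteq> (0::real)}"
  shows "l1norm y = 0 \<longleftrightarrow> y = 0"
proof
  assume "l1norm y = 0"
  then have "\<bar>y a\<bar> \<le> 0" for a using l1_comp[OF assms, of a] by simp
  then show "y = 0" by (auto simp: fun_eq_iff)
qed (simp add: l1norm_def)

lemma c00_diff: "y \<in> c00 A \<Longrightarrow> z \<in> c00 A \<Longrightarrow> finite {\<alpha>. (y - z) \<alpha> \<noteq> 0}"
  unfolding c00_def by (rule finite_subset[of _ "{\<alpha>. y \<alpha> \<noteq> 0} \<union> {\<alpha>. z \<alpha> \<noteq> 0}"]) auto

lemma c00_metric: "Metric_space (c00 A) (\<lambda>y z. l1norm (y - z))"
proof
  fix x y :: "'a \<Rightarrow> real"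
  show "0 \<le> l1norm (x - y)" by (rule l1_nonneg)
  show "l1norm (x - y) = l1norm (y - x)"
  proof -
    have "{\<alpha>. (x - y) \<alpha> \<noteq> 0} = {\<alpha>. (y - x) \<alpha> \<noteq> 0}" by auto
    then show ?thesis unfolding l1norm_def by (simp add: abs_minus_commute)
  qed
  assume "x \<in> c00 A" "y \<in> c00 A"
  then show "(l1norm (x - y) = 0) = (x = y)"
    using l1_zero[OF c00_diff[OF \<open>x \<in> c00 A\<close> \<open>y \<in> c00 A\<close>]] right_minus_eq by metis
next
  fix x y z :: "'a \<Rightarrow> real"
  assume xyz: "x \<in> c00 A" "y \<in> c00 A" "z \<in> c00 A"
  have e: "x - z = (x - y) + (y - z)" by simp
  have "l1norm ((x - y) + (y - z)) \<le> l1norm (x - y) + l1norm (y - z)"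
    by (rule l1_add; rule c00_diff) (use xyz in auto)
  then show "l1norm (x - z) \<le> l1norm (x - y) + l1norm (y - z)"
    unfolding e .
qed

lemma c00_subspace: "subspace (c00 A)"
  unfolding subspace_def c00_def
proof (intro conjI ballI allI)
  fix x y :: "'a \<Rightarrow> real"
  assume x: "x \<in> {y. finite {\<alpha>. y \<alpha> \<noteq> 0} \<and> {\<alpha>. y \<alpha> \<noteq> 0} \<subseteq> A}"
    and y: "y \<in> {y. finite {\<alpha>. y \<alpha> \<noteq> 0} \<and> {\<alpha>. y \<alpha> \<noteq> 0} \<subseteq> A}"
  have "{\<alpha>. (x + y) \<alpha> \<noteq> 0} \<subseteq> {\<alpha>. x \<alpha> \<noteq> 0} \<union> {\<alpha>. y \<alpha> \<noteq> 0}" by auto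
  then show "x + y \<in> {y. finite {\<alpha>. y \<alpha> \<noteq> 0} \<and> {\<alpha>. y \<alpha> \<noteq> 0} \<subseteq> A}"
    using x y by (auto intro: finite_subset)
next
  fix c :: real and x :: "'a \<Rightarrow> real"
  assume x: "x \<in> {y. finite {\<alpha>. y \<alpha> \<noteq> 0} \<and> {\<alpha>. y \<alpha> \<noteq> 0} \<subseteq> A}"
  have "{\<alpha>. (c *\<^sub>R x) \<alpha> \<noteq> 0} \<subseteq> {\<alpha>. x \<alpha> \<noteq> 0}" by (auto simp: scaleR_fun_apply)
  then show "c *\<^sub>R x \<in> {y. finite {\<alpha>. y \<alpha> \<noteq> 0} \<and> {\<alpha>. y \<alpha> \<noteq> 0} \<subseteq> A}"
    using x by (auto intro: finite_subset)
qed auto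




lemma c00_add: "x \<in> c00 A \<Longrightarrow> y \<in> c00 A \<Longrightarrow> x + y \<in> c00 A"
  using c00_subspace subspace_add by blast
lemma c00_scale: "x \<in> c00 A \<Longrightarrow> c *\<^sub>R x \<in> c00 A"
  using c00_subspace subspace_scale by blast
lemma c00_minus: "x \<in> c00 A \<Longrightarrow> y \<in> c00 A \<Longrightarrow> x - y \<in> c00 A"
  using c00_subspace subspace_diff by blast

lemma c00_tvs: "is_tvs (c00 A) (c00_topology A)"
proof -
  interpret M: Metric_space "c00 A" "\<lambda>y z. l1norm (y - z)" by (rule c00_metric)
  have T: "c00_topology A = M.mtopology" unfolding c00_topology_def by simp
  have add: "continuous_map (prod_topology M.mtopology M.mtopology) M.mtopology (\<lambda>(u, v). u + v)"
    unfolding M.continuous_map_to_metric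
  proof (intro ballI allI impI)
    fix p :: "('a \<Rightarrow> real) \<times> ('a \<Rightarrow> real)" and e :: real
    assume p: "p \<in> topspace (prod_topology M.mtopology M.mtopology)" and e: "0 < e"
    obtain u v where uv: "p = (u, v)" "u \<in> c00 A" "v \<in> c00 A" using p by auto
    let ?U = "M.mball u (e/2) \<times> M.mball v (e/2)"
    show "\<exists>U. openin (prod_topology M.mtopology M.mtopology) U \<and> p \<in> U \<and>
            (\<forall>y\<in>U. (case y of (u, v) \<Rightarrow> u + v) \<in> M.mball (case p of (u, v) \<Rightarrow> u + v) e)"
    proof (intro exI conjI ballI)
      show "openin (prod_topology M.mtopology M.mtopology) ?U"
        by (simp add: openin_prod_Times_iff)
      show "p \<in> ?U" using uv e by (simp add: l1_zero0)
      fix q assume q: "q \<in> ?U"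
      obtain u' v' where q': "q = (u', v')" "u' \<in> c00 A" "v' \<in> c00 A"
        "l1norm (u - u') < e/2" "l1norm (v - v') < e/2" using q by auto
      have e1: "(u + v) - (u' + v') = (u - u') + (v - v')" by simp
      have "l1norm ((u - u') + (v - v')) \<le> l1norm (u - u') + l1norm (v - v')"
        by (rule l1_add; rule c00_fin; rule c00_minus) (use uv q' in auto)
      then have "l1norm ((u + v) - (u' + v')) < e" unfolding e1 using q' by linarith
      then show "(case q of (u, v) \<Rightarrow> u + v) \<in> M.mball (case p of (u, v) \<Rightarrow> u + v) e"
        using uv q' by (simp add: c00_add)
    qed
  qed
  have scal: "continuous_map (prod_topology euclideanreal M.mtopology) M.mtopology (\<lambda>(a, v). a *\<^sub>R v)"
    unfolding M.continuous_map_to_metric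
  proof (intro ballI allI impI)
    fix p :: "real \<times> ('a \<Rightarrow> real)" and e :: real
    assume p: "p \<in> topspace (prod_topology euclideanreal M.mtopology)" and e: "0 < e"
    obtain a v where av: "p = (a, v)" "v \<in> c00 A" using p by auto
    define d1 where "d1 = min 1 (e / (2 * (l1norm v + 1)))"
    define d2 where "d2 = e / (2 * (\<bar>a\<bar> + 1))"
    have lv: "0 \<le> l1norm v" by (rule l1_nonneg)
    have d1: "0 < d1" "d1 \<le> 1" "d1 * l1norm v \<le> e / 2"
    proof -
      show "0 < d1" "d1 \<le> 1" unfolding d1_def using e lv by auto
      have "d1 * l1norm v \<le> (e / (2 * (l1norm v + 1))) * l1norm v"
        by (rule mult_right_mono) (auto simp: d1_def lv)
      also have "\<dots> = (e / 2) * (l1norm v / (l1norm v + 1))" using lv by (simp add: field_simps)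
      also have "\<dots> \<le> (e / 2) * 1"
        by (rule mult_left_mono) (use e lv in auto)
      finally show "d1 * l1norm v \<le> e / 2" by simp
    qed
    have d2: "0 < d2" "(\<bar>a\<bar> + 1) * d2 = e / 2" unfolding d2_def using e by (auto simp: field_simps)
    let ?U = "ball a d1 \<times> M.mball v d2"
    show "\<exists>U. openin (prod_topology euclideanreal M.mtopology) U \<and> p \<in> U \<and>
            (\<forall>y\<in>U. (case y of (a, v) \<Rightarrow> a *\<^sub>R v) \<in> M.mball (case p of (a, v) \<Rightarrow> a *\<^sub>R v) e)"
    proof (intro exI conjI ballI)
      show "openin (prod_topology euclideanreal M.mtopology) ?U"
        by (simp add: openin_prod_Times_iff)
      show "p \<in> ?U" using av d1 d2 by (simp add: l1_zero0)
      fix q assume q: "q \<in> ?U"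
      obtain a' v' where q': "q = (a', v')" "v' \<in> c00 A" "\<bar>a - a'\<bar> < d1" "l1norm (v - v') < d2"
        using q by (auto simp: dist_real_def)
      have e1: "a *\<^sub>R v - a' *\<^sub>R v' = (a - a') *\<^sub>R v + a' *\<^sub>R (v - v')"
        by (simp add: algebra_simps)
      have "l1norm ((a - a') *\<^sub>R v + a' *\<^sub>R (v - v')) \<le> l1norm ((a - a') *\<^sub>R v) + l1norm (a' *\<^sub>R (v - v'))"
        by (rule l1_add; rule c00_fin) (use av q' in \<open>auto intro: c00_scale c00_minus\<close>)
      also have "\<dots> = \<bar>a - a'\<bar> * l1norm v + \<bar>a'\<bar> * l1norm (v - v')"
      proof -
        have "l1norm (a' *\<^sub>R (v - v')) = \<bar>a'\<bar> * l1norm (v - v')"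
          by (rule l1_scale, rule c00_fin, rule c00_minus) (use av q' in auto)
        moreover have "l1norm ((a - a') *\<^sub>R v) = \<bar>a - a'\<bar> * l1norm v"
          by (rule l1_scale, rule c00_fin) (use av q' in auto)
        ultimately show ?thesis by simp
      qed
      also have "\<dots> < e"
      proof -
        have "\<bar>a - a'\<bar> * l1norm v \<le> d1 * l1norm v"
          using q' lv by (intro mult_right_mono) auto
        moreover have "\<bar>a'\<bar> * l1norm (v - v') \<le> (\<bar>a\<bar> + 1) * l1norm (v - v')"
          using q' d1 by (intro mult_right_mono) (auto simp: l1_nonneg)
        moreover have "(\<bar>a\<bar> + 1) * l1norm (v - v') < (\<bar>a\<bar> + 1) * d2"
          using q' by (intro mult_strict_left_mono) auto
        ultimately show ?thesis using d1 d2 by linarith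
      qed
      finally have "l1norm (a *\<^sub>R v - a' *\<^sub>R v') < e" unfolding e1 .
      then show "(case q of (a, v) \<Rightarrow> a *\<^sub>R v) \<in> M.mball (case p of (a, v) \<Rightarrow> a *\<^sub>R v) e"
        using av q' by (simp add: c00_scale)
    qed
  qed
  show ?thesis
    unfolding is_tvs_def T using c00_subspace add scal by simp
qed




lemma cont_glue:
  assumes "\<forall>x\<in>topspace X. \<exists>W. openin X W \<and> x \<in> W \<and> continuous_map (subtopology X W) Y f"
  shows "continuous_map X Y f"
  unfolding continuous_map
proof (intro conjI allI impI)
  show "f ` topspace X \<subseteq> topspace Y"
  proof
    fix y assume "y \<in> f ` topspace X"
    then obtain x where x: "x \<in> topspace X" "y = f x" by blast
    then obtain W where W: "openin X W" "x \<in> W" "continuous_map (subtopology X W) Y f" using assms by blast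
    then show "y \<in> topspace Y" using x by (auto simp: continuous_map)
  qed
  fix V assume V: "openin Y V"
  show "openin X {x \<in> topspace X. f x \<in> V}"
  proof (rule openin_subopen[THEN iffD2], rule ballI)
    fix x assume "x \<in> {x \<in> topspace X. f x \<in> V}"
    then have x: "x \<in> topspace X" "f x \<in> V" by auto
    then obtain W where W: "openin X W" "x \<in> W" "continuous_map (subtopology X W) Y f" using assms by blast
    have "openin (subtopology X W) {z \<in> topspace (subtopology X W). f z \<in> V}"
      using W(3) V by (rule openin_continuous_map_preimage)
    then have o: "openin X {z \<in> topspace (subtopology X W). f z \<in> V}"
      using W(1) by (rule openin_trans_full)
    show "\<exists>T. openin X T \<and> x \<in> T \<and> T \<subseteq> {x \<in> topspace X. f x \<in> V}"
      by (rule exI[of _ "{z \<in> topspace (subtopology X W). f z \<in> V}"]) (use o x W in auto)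
  qed
qed

lemma tvs_comb_cont:
  assumes T: "is_tvs S T" and F: "finite F" "F \<subseteq> S"
    and c: "\<And>\<alpha>. \<alpha> \<in> F \<Longrightarrow> continuous_map Y euclideanreal (c \<alpha>)"
  shows "continuous_map Y T (\<lambda>x. \<Sum>\<alpha>\<in>F. c \<alpha> x *\<^sub>R \<alpha>)"
  using F c
proof (induction F rule: finite_induct)
  case empty
  have "0 \<in> topspace T" using T unfolding is_tvs_def by (auto intro: subspace_0)
  then show ?case by simp
next
  case (insert a F)
  have addc: "continuous_map (prod_topology T T) T (\<lambda>(u, v). u + v)"
    and scc: "continuous_map (prod_topology euclideanreal T) T (\<lambda>(a, v). a *\<^sub>R v)"
    and top: "topspace T = S"
    using T unfolding is_tvs_def by auto
  have IH: "continuous_map Y T (\<lambda>x. \<Sum>\<alpha>\<in>F. c \<alpha> x *\<^sub>R \<alpha>)" using insert by auto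
  have ca: "continuous_map Y euclideanreal (c a)" using insert by auto
  have aT: "a \<in> topspace T" using insert top by auto
  have "continuous_map Y (prod_topology euclideanreal T) (\<lambda>x. (c a x, a))"
    using ca aT by (intro continuous_map_pairedI) auto
  then have "continuous_map Y T ((\<lambda>(a, v). a *\<^sub>R v) \<circ> (\<lambda>x. (c a x, a)))"
    using scc by (rule continuous_map_compose)
  moreover have "((\<lambda>(a, v). a *\<^sub>R v) \<circ> (\<lambda>x. (c a x, a))) = (\<lambda>x. c a x *\<^sub>R a)"
    by (simp add: fun_eq_iff)
  ultimately have s1: "continuous_map Y T (\<lambda>x. c a x *\<^sub>R a)" by (simp only:)
  have "continuous_map Y (prod_topology T T) (\<lambda>x. (c a x *\<^sub>R a, \<Sum>\<alpha>\<in>F. c \<alpha> x *\<^sub>R \<alpha>))"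
    using s1 IH by (intro continuous_map_pairedI)
  then have "continuous_map Y T ((\<lambda>(u, v). u + v) \<circ> (\<lambda>x. (c a x *\<^sub>R a, \<Sum>\<alpha>\<in>F. c \<alpha> x *\<^sub>R \<alpha>)))"
    using addc by (rule continuous_map_compose)
  moreover have "((\<lambda>(u, v). u + v) \<circ> (\<lambda>x. (c a x *\<^sub>R a, \<Sum>\<alpha>\<in>F. c \<alpha> x *\<^sub>R \<alpha>))) = (\<lambda>x. c a x *\<^sub>R a + (\<Sum>\<alpha>\<in>F. c \<alpha> x *\<^sub>R \<alpha>))"
    by (simp add: fun_eq_iff)
  ultimately have "continuous_map Y T (\<lambda>x. c a x *\<^sub>R a + (\<Sum>\<alpha>\<in>F. c \<alpha> x *\<^sub>R \<alpha>))" by (simp only:)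
  then show ?case using insert by simp
qed

lemma cont_Max:
  assumes "finite F" "F \<noteq> {}" "\<And>\<alpha>. \<alpha> \<in> F \<Longrightarrow> continuous_map Y euclideanreal (f \<alpha>)"
  shows "continuous_map Y euclideanreal (\<lambda>x. Max ((\<lambda>\<alpha>. f \<alpha> x) ` F))"
  using assms
proof (induction F rule: finite_ne_induct)
  case (singleton a) then show ?case by simp
next
  case (insert a F)
  have "continuous_map Y euclideanreal (\<lambda>x. max (f a x) (Max ((\<lambda>\<alpha>. f \<alpha> x) ` F)))"
    using insert by (intro continuous_map_real_max) auto
  then show ?case using insert by simp
qed




lemma lf_refine:
  assumes pu: "partition_of_unity X A \<xi>"
  shows "\<exists>P h. (\<forall>\<alpha> x. 0 \<le> h \<alpha> x) \<and>
     (\<forall>x\<in>topspace X. finite (P x) \<and> P x \<noteq> {} \<and> P x \<subseteq> A \<and> (\<forall>\<alpha>\<in>P x. 0 < h \<alpha> x \<and> \<xi> \<alpha> x \<noteq> 0)) \<and>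
     (\<forall>x0\<in>topspace X. \<exists>W F. openin X W \<and> x0 \<in> W \<and> finite F \<and> F \<subseteq> A \<and> (\<forall>x\<in>W. P x \<subseteq> F) \<and>
         (\<forall>\<alpha>\<in>F. continuous_map (subtopology X W) euclideanreal (h \<alpha>)) \<and>
         (\<forall>x\<in>W. \<forall>\<alpha>\<in>F - P x. h \<alpha> x = 0))"
proof -
  have cont: "\<And>\<alpha>. \<alpha> \<in> A \<Longrightarrow> continuous_map X euclideanreal (\<xi> \<alpha>)"
    and bnd0: "\<And>\<alpha> x. \<alpha> \<in> A \<Longrightarrow> x \<in> topspace X \<Longrightarrow> 0 \<le> \<xi> \<alpha> x"
    and bnd1: "\<And>\<alpha> x. \<alpha> \<in> A \<Longrightarrow> x \<in> topspace X \<Longrightarrow> \<xi> \<alpha> x \<le> 1"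
    and hs: "\<And>x. x \<in> topspace X \<Longrightarrow> ((\<lambda>\<alpha>. \<xi> \<alpha> x) has_sum 1) A"
    using pu unfolding partition_of_unity_def by auto
  define g where "g x = Sup ((\<lambda>\<alpha>. \<xi> \<alpha> x) ` A)" for x
  define h where "h \<alpha> x = max 0 (\<xi> \<alpha> x - g x / 2)" for \<alpha> x
  define P where "P x = {\<alpha>\<in>A. g x / 2 < \<xi> \<alpha> x}" for x
  have Ane: "A \<noteq> {}" if "x \<in> topspace X" for x
  proof
    assume "A = {}"
    then have "((\<lambda>\<alpha>. \<xi> \<alpha> x) has_sum 0) A" by simp
    from has_sum_unique[OF hs[OF that] this] show False by simp
  qed
  have bdd: "bdd_above ((\<lambda>\<alpha>. \<xi> \<alpha> x) ` A)" if "x \<in> topspace X" for x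
    using bnd1[OF _ that] by (intro bdd_aboveI2) auto
  have le_g: "\<xi> \<alpha> x \<le> g x" if "x \<in> topspace X" "\<alpha> \<in> A" for x \<alpha>
    unfolding g_def using bdd[OF that(1)] that(2) by (intro cSup_upper) auto
  have g_pos: "0 < g x" if x: "x \<in> topspace X" for x
  proof -
    have "\<exists>\<alpha>\<in>A. \<xi> \<alpha> x \<noteq> 0"
    proof (rule ccontr)
      assume "\<not> ?thesis"
      then have "((\<lambda>\<alpha>. \<xi> \<alpha> x) has_sum 0) A" by (intro has_sum_0) auto
      from has_sum_unique[OF hs[OF x] this] show False by simp
    qed
    then obtain \<alpha> where "\<alpha> \<in> A" "\<xi> \<alpha> x \<noteq> 0" by blast
    moreover have "0 \<le> \<xi> \<alpha> x" using bnd0 \<open>\<alpha> \<in> A\<close> x by blast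
    ultimately show ?thesis using le_g[OF x \<open>\<alpha> \<in> A\<close>] by linarith
  qed
  have gsup: "\<exists>\<alpha>\<in>A. t < \<xi> \<alpha> x" if "x \<in> topspace X" "t < g x" for x t
  proof -
    have "\<exists>s\<in>(\<lambda>\<alpha>. \<xi> \<alpha> x) ` A. t < s"
      using that Ane[OF that(1)] unfolding g_def by (intro less_cSupD) auto
    then show ?thesis by blast
  qed
  have psum: "(\<Sum>\<alpha>\<in>F. \<xi> \<alpha> x) \<le> 1" if "x \<in> topspace X" "finite F" "F \<subseteq> A" for x F
  proof (rule has_sum_mono'[OF _ hs[OF that(1)]])
    show "((\<lambda>\<alpha>. \<xi> \<alpha> x) has_sum (\<Sum>\<alpha>\<in>F. \<xi> \<alpha> x)) F" using that(2) by (rule has_sum_finite)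
  qed (use that bnd0 in auto)
  have approx: "\<exists>F. finite F \<and> F \<subseteq> A \<and> 1 - e < (\<Sum>\<alpha>\<in>F. \<xi> \<alpha> x)" if "x \<in> topspace X" "0 < e" for x e
  proof -
    have "((\<lambda>F. \<Sum>\<alpha>\<in>F. \<xi> \<alpha> x) \<longlongrightarrow> 1) (finite_subsets_at_top A)"
      using hs[OF that(1)] unfolding has_sum_def by simp
    then have "eventually (\<lambda>F. 1 - e < (\<Sum>\<alpha>\<in>F. \<xi> \<alpha> x)) (finite_subsets_at_top A)"
      using that(2) by (intro order_tendstoD(1)) auto
    then show ?thesis unfolding eventually_finite_subsets_at_top by blast
  qed
  have local: "\<exists>W F. openin X W \<and> x0 \<in> W \<and> finite F \<and> F \<subseteq> A \<and> (\<forall>x\<in>W. P x \<subseteq> F) \<and>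
         (\<forall>\<alpha>\<in>F. continuous_map (subtopology X W) euclideanreal (h \<alpha>)) \<and>
         (\<forall>x\<in>W. \<forall>\<alpha>\<in>F - P x. h \<alpha> x = 0)" if x0: "x0 \<in> topspace X" for x0
  proof -
    define m where "m = g x0"
    have m: "0 < m" unfolding m_def using g_pos[OF x0] .
    obtain F where F: "finite F" "F \<subseteq> A" "1 - m/4 < (\<Sum>\<alpha>\<in>F. \<xi> \<alpha> x0)"
      using approx[OF x0, of "m/4"] m by auto
    define W0 where "W0 = {x \<in> topspace X. (\<Sum>\<alpha>\<in>F. \<xi> \<alpha> x) \<in> {1 - m/4<..}}"
    define W1 where "W1 = (\<lambda>\<alpha>. {x \<in> topspace X. \<xi> \<alpha> x \<in> {\<xi> \<alpha> x0 - m/4 <..< \<xi> \<alpha> x0 + m/4}})"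
    define W where "W = W0 \<inter> ((\<Inter>\<alpha>\<in>F. W1 \<alpha>) \<inter> topspace X)"
    have "openin X W0" unfolding W0_def
    proof (rule openin_continuous_map_preimage)
      show "continuous_map X euclideanreal (\<lambda>x. \<Sum>\<alpha>\<in>F. \<xi> \<alpha> x)"
        using F cont by (intro continuous_map_sum) auto
    qed simp
    moreover have "openin X ((\<Inter>\<alpha>\<in>F. W1 \<alpha>) \<inter> topspace X)"
    proof (rule openin_INT[OF F(1)])
      fix \<alpha> assume "\<alpha> \<in> F"
      then show "openin X (W1 \<alpha>)" unfolding W1_def
        using F cont by (intro openin_continuous_map_preimage) auto
    qed
    ultimately have oW: "openin X W" unfolding W_def by (rule openin_Int)
    have Wtop: "x \<in> topspace X" if "x \<in> W" for x using that unfolding W_def by blast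
    have Wsum: "1 - m/4 < (\<Sum>\<alpha>\<in>F. \<xi> \<alpha> x)" if "x \<in> W" for x using that unfolding W_def W0_def by auto
    have Wc: "\<xi> \<alpha> x0 - m/4 < \<xi> \<alpha> x \<and> \<xi> \<alpha> x < \<xi> \<alpha> x0 + m/4" if "x \<in> W" "\<alpha> \<in> F" for x \<alpha>
      using that unfolding W_def W1_def by auto
    have x0W: "x0 \<in> W" unfolding W_def W0_def W1_def using x0 F(3) m by auto
    have out: "\<xi> \<beta> x < m/4" if "x \<in> W" "\<beta> \<in> A" "\<beta> \<notin> F" for x \<beta>
    proof -
      have "(\<Sum>\<alpha>\<in>insert \<beta> F. \<xi> \<alpha> x) \<le> 1" using psum[OF Wtop[OF that(1)], of "insert \<beta> F"] F that by simp
      then have "\<xi> \<beta> x + (\<Sum>\<alpha>\<in>F. \<xi> \<alpha> x) \<le> 1" using F(1) that(3) by simp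
      then show ?thesis using Wsum[OF that(1)] by linarith
    qed
    obtain \<alpha>0 where a0: "\<alpha>0 \<in> A" "3*m/4 < \<xi> \<alpha>0 x0"
      using gsup[OF x0, of "3*m/4"] m unfolding m_def by auto
    have a0F: "\<alpha>0 \<in> F"
    proof (rule ccontr)
      assume "\<alpha>0 \<notin> F"
      then have "\<xi> \<alpha>0 x0 < m/4" using out[OF x0W a0(1)] by blast
      then show False using a0 m by linarith
    qed
    have a0W: "m/2 < \<xi> \<alpha>0 x" if "x \<in> W" for x using Wc[OF that a0F] a0 by linarith
    have gW: "g x = Max ((\<lambda>\<alpha>. \<xi> \<alpha> x) ` F)" if x: "x \<in> W" for x
      unfolding g_def
    proof (rule cSup_eq_maximum)
      show "Max ((\<lambda>\<alpha>. \<xi> \<alpha> x) ` F) \<in> (\<lambda>\<alpha>. \<xi> \<alpha> x) ` A"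
        using F a0F by (intro subsetD[OF image_mono[OF F(2)]] Max_in) auto
      fix s assume "s \<in> (\<lambda>\<alpha>. \<xi> \<alpha> x) ` A"
      then obtain \<beta> where b: "\<beta> \<in> A" "s = \<xi> \<beta> x" by blast
      have mx: "\<xi> \<alpha>0 x \<le> Max ((\<lambda>\<alpha>. \<xi> \<alpha> x) ` F)" using F(1) a0F by (intro Max_ge) auto
      show "s \<le> Max ((\<lambda>\<alpha>. \<xi> \<alpha> x) ` F)"
      proof (cases "\<beta> \<in> F")
        case True then show ?thesis using b F(1) by (intro Max_ge) auto
      next
        case False then show ?thesis using out[OF x b(1)] a0W[OF x] mx b m by linarith
      qed
    qed
    have PF: "P x \<subseteq> F" if x: "x \<in> W" for x
    proof
      fix \<alpha> assume a: "\<alpha> \<in> P x"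
      show "\<alpha> \<in> F"
      proof (rule ccontr)
        assume "\<alpha> \<notin> F"
        then have "\<xi> \<alpha> x < m/4" using out[OF x] a unfolding P_def by blast
        moreover have "\<xi> \<alpha>0 x \<le> g x" using le_g[OF Wtop[OF x] a0(1)] .
        ultimately show False using a a0W[OF x] unfolding P_def by auto
      qed
    qed
    have hc: "continuous_map (subtopology X W) euclideanreal (h \<alpha>)" if a: "\<alpha> \<in> F" for \<alpha>
    proof -
      have cF: "\<And>\<beta>. \<beta> \<in> F \<Longrightarrow> continuous_map (subtopology X W) euclideanreal (\<xi> \<beta>)"
        using F cont by (intro continuous_map_from_subtopology) auto
      have "continuous_map (subtopology X W) euclideanreal (\<lambda>x. Max ((\<lambda>\<beta>. \<xi> \<beta> x) ` F))"
        using F a cF by (intro cont_Max) auto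
      then have "continuous_map (subtopology X W) euclideanreal
                   (\<lambda>x. max 0 (\<xi> \<alpha> x - Max ((\<lambda>\<beta>. \<xi> \<beta> x) ` F) / 2))"
        using cF[OF a] by (intro continuous_map_real_max continuous_map_diff continuous_map_real_divide) auto
      then show ?thesis
        by (rule continuous_map_eq) (simp add: h_def gW)
    qed
    have hz: "h \<alpha> x = 0" if "x \<in> W" "\<alpha> \<in> F - P x" for x \<alpha>
    proof -
      have "\<alpha> \<in> A" "\<alpha> \<notin> P x" using that F(2) by auto
      then have "\<not> g x / 2 < \<xi> \<alpha> x" unfolding P_def by blast
      then have "\<xi> \<alpha> x - g x / 2 \<le> 0" by linarith
      then show ?thesis unfolding h_def by (rule max_absorb1)
    qed
    show ?thesis
    proof (rule exI[of _ W], rule exI[of _ F], intro conjI)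
      show "\<forall>x\<in>W. P x \<subseteq> F" using PF by blast
      show "\<forall>\<alpha>\<in>F. continuous_map (subtopology X W) euclideanreal (h \<alpha>)" using hc by blast
      show "\<forall>x\<in>W. \<forall>\<alpha>\<in>F - P x. h \<alpha> x = 0" using hz by blast
    qed (use oW x0W F in auto)
  qed
  have part1: "\<forall>\<alpha> x. 0 \<le> h \<alpha> x" unfolding h_def by simp
  have part2: "\<forall>x\<in>topspace X. finite (P x) \<and> P x \<noteq> {} \<and> P x \<subseteq> A \<and> (\<forall>\<alpha>\<in>P x. 0 < h \<alpha> x \<and> \<xi> \<alpha> x \<noteq> 0)"
  proof (intro ballI conjI)
    fix x assume x: "x \<in> topspace X"
    obtain W F where WF: "openin X W" "x \<in> W" "finite F" "\<forall>x\<in>W. P x \<subseteq> F" using local[OF x] by blast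
    show "finite (P x)" using WF by (meson finite_subset)
    show "P x \<noteq> {}" using gsup[OF x, of "g x / 2"] g_pos[OF x] unfolding P_def by auto
    show "P x \<subseteq> A" unfolding P_def by auto
    fix \<alpha> assume "\<alpha> \<in> P x"
    then have "g x / 2 < \<xi> \<alpha> x" unfolding P_def by auto
    then show "0 < h \<alpha> x" "\<xi> \<alpha> x \<noteq> 0" unfolding h_def using g_pos[OF x] by auto
  qed
  have part3: "\<forall>x0\<in>topspace X. \<exists>W F. openin X W \<and> x0 \<in> W \<and> finite F \<and> F \<subseteq> A \<and> (\<forall>x\<in>W. P x \<subseteq> F) \<and>
         (\<forall>\<alpha>\<in>F. continuous_map (subtopology X W) euclideanreal (h \<alpha>)) \<and>
         (\<forall>x\<in>W. \<forall>\<alpha>\<in>F - P x. h \<alpha> x = 0)"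
    using local by blast
  show ?thesis
    by (rule exI[of _ P], rule exI[of _ h]) (intro conjI part1 part2 part3)
qed




lemma lf_selection:
  fixes \<Phi> :: "'a \<Rightarrow> 'e::real_vector set" and A :: "'e set"
  assumes pu: "partition_of_unity X A \<xi>"
    and sub: "\<forall>\<alpha>\<in>A. \<forall>x\<in>topspace X. \<xi> \<alpha> x \<noteq> 0 \<longrightarrow> \<alpha> \<in> \<Phi> x"
    and cv: "convex_valued X \<Phi>"
  shows "\<exists>f. is_selection X \<Phi> f \<and> (\<forall>x0\<in>topspace X. \<exists>W F c. openin X W \<and> x0 \<in> W \<and> finite F \<and> F \<subseteq> A \<and>
            (\<forall>\<alpha>\<in>F. continuous_map (subtopology X W) euclideanreal (c \<alpha>)) \<and>
            (\<forall>x\<in>W. f x = (\<Sum>\<alpha>\<in>F. c \<alpha> x *\<^sub>R \<alpha>)))"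
proof -
  obtain P h where h0: "\<forall>\<alpha> x. 0 \<le> h \<alpha> x"
    and Pp: "\<forall>x\<in>topspace X. finite (P x) \<and> P x \<noteq> {} \<and> P x \<subseteq> A \<and> (\<forall>\<alpha>\<in>P x. 0 < h \<alpha> x \<and> \<xi> \<alpha> x \<noteq> 0)"
    and loc: "\<forall>x0\<in>topspace X. \<exists>W F. openin X W \<and> x0 \<in> W \<and> finite F \<and> F \<subseteq> A \<and> (\<forall>x\<in>W. P x \<subseteq> F) \<and>
         (\<forall>\<alpha>\<in>F. continuous_map (subtopology X W) euclideanreal (h \<alpha>)) \<and>
         (\<forall>x\<in>W. \<forall>\<alpha>\<in>F - P x. h \<alpha> x = 0)"
    using lf_refine[OF pu] by blast
  define H where "H x = (\<Sum>\<alpha>\<in>P x. h \<alpha> x)" for x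
  define f where "f x = (\<Sum>\<alpha>\<in>P x. (h \<alpha> x / H x) *\<^sub>R \<alpha>)" for x
  have Hpos: "0 < H x" if x: "x \<in> topspace X" for x
  proof -
    obtain \<alpha> where a: "\<alpha> \<in> P x" using Pp x by blast
    have "h \<alpha> x \<le> H x" unfolding H_def
      by (rule member_le_sum) (use a Pp x h0 in auto)
    then show ?thesis using Pp x a by force
  qed
  have sel: "is_selection X \<Phi> f"
    unfolding is_selection_def
  proof
    fix x assume x: "x \<in> topspace X"
    have "(\<Sum>\<alpha>\<in>P x. h \<alpha> x / H x) = H x / H x" unfolding H_def by (rule sum_divide_distrib[symmetric])
    also have "\<dots> = 1" using Hpos[OF x] by simp
    finally have s1: "(\<Sum>\<alpha>\<in>P x. h \<alpha> x / H x) = 1" .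
    show "f x \<in> \<Phi> x" unfolding f_def
    proof (rule convex_sum)
      show "finite (P x)" using Pp x by blast
      show "convex (\<Phi> x)" using cv x unfolding convex_valued_def by blast
      show "(\<Sum>i\<in>P x. h i x / H x) = 1" by (rule s1)
      show "\<And>i. i \<in> P x \<Longrightarrow> 0 \<le> h i x / H x" using h0 Hpos[OF x] by simp
      show "\<And>i. i \<in> P x \<Longrightarrow> i \<in> \<Phi> x" using Pp x sub by blast
    qed
  qed
  have loc2: "\<exists>W F c. openin X W \<and> x0 \<in> W \<and> finite F \<and> F \<subseteq> A \<and>
            (\<forall>\<alpha>\<in>F. continuous_map (subtopology X W) euclideanreal (c \<alpha>)) \<and>
            (\<forall>x\<in>W. f x = (\<Sum>\<alpha>\<in>F. c \<alpha> x *\<^sub>R \<alpha>))" if x0: "x0 \<in> topspace X" for x0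
  proof -
    obtain W F where W: "openin X W" "x0 \<in> W" "finite F" "F \<subseteq> A" "\<forall>x\<in>W. P x \<subseteq> F"
      "\<forall>\<alpha>\<in>F. continuous_map (subtopology X W) euclideanreal (h \<alpha>)" "\<forall>x\<in>W. \<forall>\<alpha>\<in>F - P x. h \<alpha> x = 0"
    proof -
      have "\<exists>W F. openin X W \<and> x0 \<in> W \<and> finite F \<and> F \<subseteq> A \<and> (\<forall>x\<in>W. P x \<subseteq> F) \<and>
         (\<forall>\<alpha>\<in>F. continuous_map (subtopology X W) euclideanreal (h \<alpha>)) \<and>
         (\<forall>x\<in>W. \<forall>\<alpha>\<in>F - P x. h \<alpha> x = 0)" using loc x0 by (rule bspec)
      then show ?thesis using that by (elim exE conjE) blast
    qed
    define HF where "HF x = (\<Sum>\<alpha>\<in>F. h \<alpha> x)" for x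
    define c where "c \<alpha> x = h \<alpha> x / HF x" for \<alpha> x
    have Wt: "x \<in> topspace X" if "x \<in> W" for x using openin_subset[OF W(1)] that by blast
    have HH: "H x = HF x" if x: "x \<in> W" for x
      unfolding H_def HF_def by (rule sum.mono_neutral_left) (use W x in auto)
    have fF: "f x = (\<Sum>\<alpha>\<in>F. c \<alpha> x *\<^sub>R \<alpha>)" if x: "x \<in> W" for x
      unfolding f_def c_def HH[OF x, symmetric] by (rule sum.mono_neutral_left) (use W x in auto)
    have HFc: "continuous_map (subtopology X W) euclideanreal HF"
      unfolding HF_def using W by (intro continuous_map_sum) auto
    have cc: "continuous_map (subtopology X W) euclideanreal (c \<alpha>)" if a: "\<alpha> \<in> F" for \<alpha>
      unfolding c_def
    proof (rule continuous_map_real_divide)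
      show "continuous_map (subtopology X W) euclideanreal (h \<alpha>)" using W a by blast
      show "continuous_map (subtopology X W) euclideanreal HF" by (rule HFc)
      fix x assume "x \<in> topspace (subtopology X W)"
      then have "x \<in> W" "x \<in> topspace X" by auto
      then show "HF x \<noteq> 0" using HH[of x] Hpos[of x] by simp
    qed
    have c1: "\<forall>\<alpha>\<in>F. continuous_map (subtopology X W) euclideanreal (c \<alpha>)" using cc by blast
    have c2: "\<forall>x\<in>W. f x = (\<Sum>\<alpha>\<in>F. c \<alpha> x *\<^sub>R \<alpha>)" using fF by blast
    show ?thesis
      by (rule exI[of _ W], rule exI[of _ F], rule exI[of _ c]) (intro conjI W(1) W(2) W(3) W(4) c1 c2)
  qed
  show ?thesis
    by (rule exI[of _ f]) (use sel loc2 in blast)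
qed

definition covmap :: "'i set \<Rightarrow> ('i \<Rightarrow> 'a set) \<Rightarrow> 'a \<Rightarrow> ('i \<Rightarrow> real) set" where
  "covmap A U x = {y \<in> c00 A. (\<forall>\<alpha>. 0 \<le> y \<alpha>) \<and> (\<Sum>\<alpha>\<in>{\<alpha>. y \<alpha> \<noteq> 0}. y \<alpha>) = 1 \<and> (\<forall>\<alpha>. y \<alpha> \<noteq> 0 \<longrightarrow> x \<in> U \<alpha>)}"

lemma sum_supp_eq:
  assumes "finite G" "{\<alpha>. y \<alpha> \<noteq> 0} \<subseteq> G"
  shows "(\<Sum>\<alpha>\<in>{\<alpha>. y \<alpha> \<noteq> 0}. y \<alpha>) = (\<Sum>\<alpha>\<in>G. (y \<alpha>::real))"
  by (rule sum.mono_neutral_left) (use assms in auto)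

lemma covmap_props:
  assumes cov: "open_cover_indexed X A U"
  shows "setvalued_into X (c00 A) (covmap A U) \<and> convex_valued X (covmap A U) \<and> totally_lsc X (covmap A U)"
proof (intro conjI)
  have Uo: "\<And>\<alpha>. \<alpha> \<in> A \<Longrightarrow> openin X (U \<alpha>)" and Uc: "(\<Union>\<alpha>\<in>A. U \<alpha>) = topspace X"
    using cov unfolding open_cover_indexed_def by auto
  show "setvalued_into X (c00 A) (covmap A U)"
    unfolding setvalued_into_def nonempty_valued_def
  proof (intro conjI ballI)
    fix x assume x: "x \<in> topspace X"
    then obtain \<alpha> where a: "\<alpha> \<in> A" "x \<in> U \<alpha>" using Uc by blast
    define y where "y = (\<lambda>\<beta>. if \<beta> = \<alpha> then 1 else (0::real))"
    have sy: "{\<beta>. y \<beta> \<noteq> 0} = {\<alpha>}" unfolding y_def by auto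
    have "y \<in> covmap A U x" unfolding covmap_def c00_def sy using a by (auto simp: y_def)
    then show "covmap A U x \<noteq> {}" by blast
    show "covmap A U x \<subseteq> c00 A" unfolding covmap_def by blast
  qed
  show "convex_valued X (covmap A U)"
    unfolding convex_valued_def
  proof (intro ballI convexI)
    fix x y z u v assume y: "y \<in> covmap A U x" and z: "z \<in> covmap A U x"
      and uv0: "0 \<le> u" "0 \<le> v" "u + v = (1::real)"
    have uv: "0 \<le> u \<and> 0 \<le> v \<and> u + v = (1::real)" using uv0 by blast
    let ?G = "{\<alpha>. y \<alpha> \<noteq> 0} \<union> {\<alpha>. z \<alpha> \<noteq> 0}"
    have yc: "y \<in> c00 A" and zc: "z \<in> c00 A" using y z unfolding covmap_def by auto
    have fG: "finite ?G" using c00_fin[OF yc] c00_fin[OF zc] by simp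
    define w where "w = u *\<^sub>R y + v *\<^sub>R z"
    have wa: "w \<alpha> = u * y \<alpha> + v * z \<alpha>" for \<alpha> unfolding w_def by (simp add: scaleR_fun_apply)
    have wc: "w \<in> c00 A" unfolding w_def using yc zc by (intro c00_add c00_scale)
    have wsupp: "{\<alpha>. w \<alpha> \<noteq> 0} \<subseteq> ?G" unfolding wa by auto
    have "(\<Sum>\<alpha>\<in>{\<alpha>. w \<alpha> \<noteq> 0}. w \<alpha>) = (\<Sum>\<alpha>\<in>?G. w \<alpha>)" by (rule sum_supp_eq[OF fG wsupp])
    also have "\<dots> = u * (\<Sum>\<alpha>\<in>?G. y \<alpha>) + v * (\<Sum>\<alpha>\<in>?G. z \<alpha>)"
      unfolding wa by (simp add: sum.distrib sum_distrib_left)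
    also have "(\<Sum>\<alpha>\<in>?G. y \<alpha>) = 1"
      using sum_supp_eq[OF fG, of y] y unfolding covmap_def by auto
    also have "(\<Sum>\<alpha>\<in>?G. z \<alpha>) = 1"
      using sum_supp_eq[OF fG, of z] z unfolding covmap_def by auto
    finally have ws: "(\<Sum>\<alpha>\<in>{\<alpha>. w \<alpha> \<noteq> 0}. w \<alpha>) = 1" using uv by simp
    have wn: "0 \<le> w \<alpha>" for \<alpha> unfolding wa using y z uv unfolding covmap_def by auto
    have wU: "w \<alpha> \<noteq> 0 \<longrightarrow> x \<in> U \<alpha>" for \<alpha>
    proof
      assume "w \<alpha> \<noteq> 0"
      then have "y \<alpha> \<noteq> 0 \<or> z \<alpha> \<noteq> 0" unfolding wa by auto
      then show "x \<in> U \<alpha>" using y z unfolding covmap_def by auto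
    qed
    show "u *\<^sub>R y + v *\<^sub>R z \<in> covmap A U x"
      unfolding w_def[symmetric] covmap_def using wc ws wn wU by blast
  qed
  show "totally_lsc X (covmap A U)"
    unfolding totally_lsc_def
  proof
    fix V
    have eq: "{x \<in> topspace X. covmap A U x \<inter> V \<noteq> {}} = (\<Union>y\<in>V. {x \<in> topspace X. y \<in> covmap A U x})"
      by blast
    have "openin X {x \<in> topspace X. y \<in> covmap A U x}" for y
    proof (cases "y \<in> c00 A \<and> (\<forall>\<alpha>. 0 \<le> y \<alpha>) \<and> (\<Sum>\<alpha>\<in>{\<alpha>. y \<alpha> \<noteq> 0}. y \<alpha>) = 1")
      case True
      then have sA: "finite {\<alpha>. y \<alpha> \<noteq> 0}" "{\<alpha>. y \<alpha> \<noteq> 0} \<subseteq> A" unfolding c00_def by auto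
      have "{x \<in> topspace X. y \<in> covmap A U x} = (\<Inter>\<alpha>\<in>{\<alpha>. y \<alpha> \<noteq> 0}. U \<alpha>) \<inter> topspace X"
        using True unfolding covmap_def by auto
      moreover have "openin X ((\<Inter>\<alpha>\<in>{\<alpha>. y \<alpha> \<noteq> 0}. U \<alpha>) \<inter> topspace X)"
        using sA Uo by (intro openin_INT) auto
      ultimately show ?thesis by simp
    next
      case False
      then have e: "{x \<in> topspace X. y \<in> covmap A U x} = {}" unfolding covmap_def by auto
      show ?thesis unfolding e by (rule openin_empty)
    qed
    then show "openin X {x \<in> topspace X. covmap A U x \<inter> V \<noteq> {}}"
      unfolding eq by (intro openin_Union) auto
  qed
qed

lemma covmap_pu:
  assumes cov: "open_cover_indexed X A U"
    and sel: "is_selection X (covmap A U) f"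
    and fc: "\<And>\<alpha>. continuous_map X euclideanreal (\<lambda>x. f x \<alpha>)"
  shows "\<exists>\<xi>. partition_of_unity X A \<xi> \<and> index_subordinated X A \<xi> U"
proof (intro exI conjI)
  have fx: "f x \<in> c00 A" "\<And>\<alpha>. 0 \<le> f x \<alpha>" "(\<Sum>\<alpha>\<in>{\<alpha>. f x \<alpha> \<noteq> 0}. f x \<alpha>) = 1"
    "\<And>\<alpha>. f x \<alpha> \<noteq> 0 \<Longrightarrow> x \<in> U \<alpha>" if "x \<in> topspace X" for x
    using sel that unfolding is_selection_def covmap_def by auto
  show "partition_of_unity X A (\<lambda>\<alpha> x. f x \<alpha>)"
    unfolding partition_of_unity_def
  proof (intro conjI ballI)
    fix \<alpha> x assume x: "x \<in> topspace X"
    show "0 \<le> f x \<alpha>" using fx(2)[OF x] .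
    show "f x \<alpha> \<le> 1"
    proof (cases "f x \<alpha> = 0")
      case False
      have "f x \<alpha> \<le> (\<Sum>\<alpha>\<in>{\<alpha>. f x \<alpha> \<noteq> 0}. f x \<alpha>)"
        by (rule member_le_sum) (use False fx(1,2)[OF x] c00_fin in auto)
      then show ?thesis using fx(3)[OF x] by simp
    qed simp
  next
    fix \<alpha> show "continuous_map X euclideanreal (\<lambda>x. f x \<alpha>)" by (rule fc)
  next
    fix x assume x: "x \<in> topspace X"
    have fin: "finite {\<alpha>. f x \<alpha> \<noteq> 0}" using c00_fin fx(1)[OF x] by blast
    have sA: "{\<alpha>. f x \<alpha> \<noteq> 0} \<subseteq> A" using fx(1)[OF x] unfolding c00_def by auto
    show "countable {\<alpha> \<in> A. f x \<alpha> \<noteq> 0}"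
      by (rule countable_finite) (use fin in auto)
    show "((\<lambda>\<alpha>. f x \<alpha>) has_sum 1) A"
      by (rule has_sum_finite_neutralI[OF fin sA]) (use fx(3)[OF x] in auto)
  qed
  show "index_subordinated X A (\<lambda>\<alpha> x. f x \<alpha>) U"
    unfolding index_subordinated_def using fx(4) by blast
qed




lemma c00_eval_cont: "continuous_map (c00_topology A) euclideanreal (\<lambda>y. y a)"
proof -
  interpret M: Metric_space "c00 A" "\<lambda>y z. l1norm (y - z)" by (rule c00_metric)
  have "continuous_map M.mtopology euclideanreal (\<lambda>y. y a)"
    unfolding M.continuous_map_from_metric
  proof (intro conjI ballI allI impI)
    show "(\<lambda>y. y a) \<in> c00 A \<rightarrow> topspace euclideanreal" by simp
    fix b U assume b: "b \<in> c00 A" and U: "openin euclideanreal U \<and> b a \<in> U"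
    then obtain r where r: "0 < r" "ball (b a) r \<subseteq> U" using open_contains_ball by force
    show "\<exists>r>0. \<forall>x. x \<in> c00 A \<and> l1norm (b - x) < r \<longrightarrow> x a \<in> U"
    proof (intro exI conjI allI impI)
      fix x assume x: "x \<in> c00 A \<and> l1norm (b - x) < r"
      have "\<bar>(b - x) a\<bar> \<le> l1norm (b - x)"
        by (rule l1_comp, rule c00_fin, rule c00_minus) (use b x in auto)
      then have "dist (b a) (x a) < r" using x by (simp add: dist_real_def)
      then show "x a \<in> U" using r by auto
    qed (rule r(1))
  qed
  then show ?thesis unfolding c00_topology_def .
qed

lemma iii_to_sel:
  fixes \<Phi> :: "'a \<Rightarrow> 'e::real_vector set"
  assumes c3: "cond_iii X TYPE('e)"
    and sv: "setvalued_into X S \<Phi>" and cv: "convex_valued X \<Phi>" and tl: "totally_lsc X \<Phi>"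
  shows "\<exists>f. is_selection X \<Phi> f \<and> (\<forall>x0\<in>topspace X. \<exists>W F c. openin X W \<and> x0 \<in> W \<and> finite F \<and> F \<subseteq> S \<and>
            (\<forall>\<alpha>\<in>F. continuous_map (subtopology X W) euclideanreal (c \<alpha>)) \<and>
            (\<forall>x\<in>W. f x = (\<Sum>\<alpha>\<in>F. c \<alpha> x *\<^sub>R \<alpha>)))"
proof -
  define U where "U y = {x \<in> topspace X. y \<in> \<Phi> x}" for y
  have cov: "open_cover_indexed X S U"
    unfolding open_cover_indexed_def
  proof (intro conjI ballI)
    fix y
    have e: "U y = {x \<in> topspace X. \<Phi> x \<inter> {y} \<noteq> {}}" unfolding U_def by auto
    have "openin X {x \<in> topspace X. \<Phi> x \<inter> {y} \<noteq> {}}" using tl unfolding totally_lsc_def by blast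
    then show "openin X (U y)" unfolding e .
  next
    show "(\<Union>y\<in>S. U y) = topspace X"
    proof
      show "(\<Union>y\<in>S. U y) \<subseteq> topspace X" unfolding U_def by auto
      show "topspace X \<subseteq> (\<Union>y\<in>S. U y)"
      proof
        fix x assume x: "x \<in> topspace X"
        then obtain y where "y \<in> \<Phi> x" using sv unfolding setvalued_into_def nonempty_valued_def by blast
        moreover then have "y \<in> S" using sv x unfolding setvalued_into_def by blast
        ultimately show "x \<in> (\<Union>y\<in>S. U y)" using x unfolding U_def by blast
      qed
    qed
  qed
  obtain \<xi> where pu: "partition_of_unity X S \<xi>" and isub: "index_subordinated X S \<xi> U"
    using c3 cov unfolding cond_iii_def by blast
  have sub: "\<forall>\<alpha>\<in>S. \<forall>x\<in>topspace X. \<xi> \<alpha> x \<noteq> 0 \<longrightarrow> \<alpha> \<in> \<Phi> x"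
    using isub unfolding index_subordinated_def U_def by blast
  show ?thesis by (rule lf_selection[OF pu sub cv])
qed

theorem theorem4p2:
  fixes X :: "'a topology"
  assumes "Hausdorff_space X"
  shows "(cond_i X TYPE('i \<Rightarrow> real) \<longrightarrow> cond_ii X TYPE('i))
       \<and> (cond_ii X TYPE('i) \<longrightarrow> cond_iii X TYPE('i))
       \<and> (cond_iii X TYPE('e::real_vector) \<longrightarrow> cond_i X TYPE('e))
       \<and> (cond_iii X TYPE('e) \<longrightarrow> cond_iv X TYPE('e))
       \<and> (cond_iv X TYPE('i \<Rightarrow> real) \<longrightarrow> cond_iii X TYPE('i))"
proof (intro conjI impI)
  assume c1: "cond_i X TYPE('i \<Rightarrow> real)"
  show "cond_ii X TYPE('i)"
    unfolding cond_ii_def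
  proof (intro allI impI)
    fix A :: "'i set" and \<Phi>
    assume "setvalued_into X (c00 A) \<Phi> \<and> convex_valued X \<Phi> \<and> totally_lsc X \<Phi>"
    then show "\<exists>f. continuous_map X (c00_topology A) f \<and> is_selection X \<Phi> f"
      by (rule c1[unfolded cond_i_def, rule_format, OF c00_tvs[of A]])
  qed
next
  assume c2: "cond_ii X TYPE('i)"
  show "cond_iii X TYPE('i)"
    unfolding cond_iii_def
  proof (intro allI impI)
    fix A :: "'i set" and U :: "'i \<Rightarrow> 'a set"
    assume cov: "open_cover_indexed X A U"
    obtain f where f: "continuous_map X (c00_topology A) f" "is_selection X (covmap A U) f"
      using c2[unfolded cond_ii_def, rule_format, OF covmap_props[OF cov]] by (elim exE conjE) blast
    have fc: "continuous_map X euclideanreal (\<lambda>x. f x \<alpha>)" for \<alpha>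
      using continuous_map_compose[OF f(1) c00_eval_cont[of A \<alpha>]] by (simp add: o_def)
    show "\<exists>\<xi>. partition_of_unity X A \<xi> \<and> index_subordinated X A \<xi> U"
      by (rule covmap_pu[OF cov f(2) fc])
  qed
next
  assume c3: "cond_iii X TYPE('e)"
  show "cond_i X TYPE('e)"
    unfolding cond_i_def
  proof (intro allI impI)
    fix S :: "'e set" and T \<Phi>
    assume tvs: "is_tvs S T"
    assume "setvalued_into X S \<Phi> \<and> convex_valued X \<Phi> \<and> totally_lsc X \<Phi>"
    then have sv: "setvalued_into X S \<Phi>" and cv: "convex_valued X \<Phi>" and tl: "totally_lsc X \<Phi>" by blast+
    obtain f where sel: "is_selection X \<Phi> f" and loc: "\<forall>x0\<in>topspace X. \<exists>W F c. openin X W \<and> x0 \<in> W \<and> finite F \<and> F \<subseteq> S \<and>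
            (\<forall>\<alpha>\<in>F. continuous_map (subtopology X W) euclideanreal (c \<alpha>)) \<and>
            (\<forall>x\<in>W. f x = (\<Sum>\<alpha>\<in>F. c \<alpha> x *\<^sub>R \<alpha>))"
      using iii_to_sel[OF c3 sv cv tl] by (elim exE conjE) blast
    have "continuous_map X T f"
    proof (rule cont_glue, rule ballI)
      fix x0 assume x0: "x0 \<in> topspace X"
      obtain W F c where W: "openin X W" "x0 \<in> W" "finite F" "F \<subseteq> S"
         "\<forall>\<alpha>\<in>F. continuous_map (subtopology X W) euclideanreal (c \<alpha>)"
         "\<forall>x\<in>W. f x = (\<Sum>\<alpha>\<in>F. c \<alpha> x *\<^sub>R \<alpha>)"
        using bspec[OF loc x0] by (elim exE conjE) blast
      have "continuous_map (subtopology X W) T (\<lambda>x. \<Sum>\<alpha>\<in>F. c \<alpha> x *\<^sub>R \<alpha>)"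
        by (rule tvs_comb_cont[OF tvs W(3,4)]) (use W(5) in blast)
      then have "continuous_map (subtopology X W) T f"
        by (rule continuous_map_eq) (use W(6) in auto)
      then show "\<exists>W. openin X W \<and> x0 \<in> W \<and> continuous_map (subtopology X W) T f"
        using W(1,2) by blast
    qed
    then show "\<exists>f. continuous_map X T f \<and> is_selection X \<Phi> f" using sel by blast
  qed
next
  assume c3: "cond_iii X TYPE('e)"
  show "cond_iv X TYPE('e)"
    unfolding cond_iv_def
  proof (intro allI impI)
    fix S :: "'e set" and \<Phi>
    assume sS: "subspace S"
    assume "setvalued_into X S \<Phi> \<and> convex_valued X \<Phi> \<and> totally_lsc X \<Phi>"
    then have sv: "setvalued_into X S \<Phi>" and cv: "convex_valued X \<Phi>" and tl: "totally_lsc X \<Phi>" by blast+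
    obtain f where sel: "is_selection X \<Phi> f" and loc: "\<forall>x0\<in>topspace X. \<exists>W F c. openin X W \<and> x0 \<in> W \<and> finite F \<and> F \<subseteq> S \<and>
            (\<forall>\<alpha>\<in>F. continuous_map (subtopology X W) euclideanreal (c \<alpha>)) \<and>
            (\<forall>x\<in>W. f x = (\<Sum>\<alpha>\<in>F. c \<alpha> x *\<^sub>R \<alpha>))"
      using iii_to_sel[OF c3 sv cv tl] by (elim exE conjE) blast
    have "continuous_map X (finite_topology S) f"
    proof (rule cont_glue, rule ballI)
      fix x0 assume x0: "x0 \<in> topspace X"
      obtain W F c where W: "openin X W" "x0 \<in> W" "finite F" "F \<subseteq> S"
         "\<forall>\<alpha>\<in>F. continuous_map (subtopology X W) euclideanreal (c \<alpha>)"
         "\<forall>x\<in>W. f x = (\<Sum>\<alpha>\<in>F. c \<alpha> x *\<^sub>R \<alpha>)"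
        using bspec[OF loc x0] by (elim exE conjE) blast
      have "continuous_map (subtopology X W) (finite_topology S) (\<lambda>x. \<Sum>\<alpha>\<in>F. c \<alpha> x *\<^sub>R \<alpha>)"
        by (rule ft_comb_cont[OF W(3,4) sS]) (use W(5) in blast)
      then have "continuous_map (subtopology X W) (finite_topology S) f"
        by (rule continuous_map_eq) (use W(6) in auto)
      then show "\<exists>W. openin X W \<and> x0 \<in> W \<and> continuous_map (subtopology X W) (finite_topology S) f"
        using W(1,2) by blast
    qed
    then show "\<exists>f. continuous_map X (finite_topology S) f \<and> is_selection X \<Phi> f" using sel by blast
  qed
next
  assume c4: "cond_iv X TYPE('i \<Rightarrow> real)"
  show "cond_iii X TYPE('i)"
    unfolding cond_iii_def
  proof (intro allI impI)
    fix A :: "'i set" and U :: "'i \<Rightarrow> 'a set"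
    assume cov: "open_cover_indexed X A U"
    obtain f where f: "continuous_map X (finite_topology (c00 A)) f" "is_selection X (covmap A U) f"
      using c4[unfolded cond_iv_def, rule_format, OF c00_subspace[of A] covmap_props[OF cov]] by (elim exE conjE) blast
    have fc: "continuous_map X euclideanreal (\<lambda>x. f x \<alpha>)" for \<alpha>
      using continuous_map_compose[OF f(1) ft_eval_cont[of "c00 A" \<alpha>]] by (simp add: o_def)
    show "\<exists>\<xi>. partition_of_unity X A \<xi> \<and> index_subordinated X A \<xi> U"
      by (rule covmap_pu[OF cov f(2) fc])
  qed
qed


end
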